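(* In the setting of the context, let $d\ge1$ be such that $\mathcal E_m\subset d\mathbb Z$ for every $m\ge1$. Then for every $j\ge1$ and all integers $\alpha,\beta$ with $P_j(\{\alpha\})>0$ and $P_j(\{\beta\})>0$, $\alpha-\beta$ is a multiple of $d$.
   Context: Let $\pi_m\ge2$ ($m\ge1$) be integers and $\eta_{m,i}\ge0$ ($m\ge1$, $0\le i\le\pi_m-1$) integers; write $\eta_m:i\mapsto\eta_{m,i}$. $\overline Y=\prod_{m\ge1}\{0,\dots,\pi_m-1\}$ with product uniform measure $\overline\nu$ and odometer $\overline S$ (add $1$ to the first coordinate with carry to the right). $\gamma(\overline y)=\sum_{m=1}^{\overline t(\overline y)}\eta_{m,\overline y_m}$ where $\overline t(\overline y)$ is the smallest $t\ge1$ with $\overline y_t<\pi_t-1$. $P_j$ is the distribution under $\overline\nu$ of $\gamma+\gamma\circ\overline S+\dots+\gamma\circ\overline S^{j-1}$. $\mathcal S_m=\eta_m(\{0,\dots,\pi_m-2\})\cup\big(\eta_{m,\pi_m-1}+\eta_{m+1}(\{0,\dots,\pi_{m+1}-2\})\big)$, $\mathcal E_m=\mathcal S_m-\mathcal S_m$. *)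

theory Defs
  imports "HOL-Probability.Probability"
begin

text \<open>Coordinates are indexed by m >= 1; points of Y are functions nat => nat
  (extensional on {1..}, i.e. value undefined at 0).\<close>

definition Ybar_measure :: "(nat \<Rightarrow> nat) \<Rightarrow> (nat \<Rightarrow> nat) measure" where
  "Ybar_measure \<pi> = (\<Pi>\<^sub>M m\<in>{1..}. measure_pmf (pmf_of_set {0..<\<pi> m}))"

definition odo_t :: "(nat \<Rightarrow> nat) \<Rightarrow> (nat \<Rightarrow> nat) \<Rightarrow> nat" where
  "odo_t \<pi> y = (LEAST t. 1 \<le> t \<and> y t < \<pi> t - 1)"

definition odometer :: "(nat \<Rightarrow> nat) \<Rightarrow> (nat \<Rightarrow> nat) \<Rightarrow> (nat \<Rightarrow> nat)" where
  "odometer \<pi> y = (\<lambda>m. if m = 0 then undefined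
                      else if m < odo_t \<pi> y then 0
                      else if m = odo_t \<pi> y then y m + 1
                      else y m)"

definition gamma :: "(nat \<Rightarrow> nat) \<Rightarrow> (nat \<Rightarrow> nat \<Rightarrow> nat) \<Rightarrow> (nat \<Rightarrow> nat) \<Rightarrow> int" where
  "gamma \<pi> \<eta> y = (\<Sum>m = 1..odo_t \<pi> y. int (\<eta> m (y m)))"

definition birkhoff_sum :: "(nat \<Rightarrow> nat) \<Rightarrow> (nat \<Rightarrow> nat \<Rightarrow> nat) \<Rightarrow> nat \<Rightarrow> (nat \<Rightarrow> nat) \<Rightarrow> int" where
  "birkhoff_sum \<pi> \<eta> j y = (\<Sum>i<j. gamma \<pi> \<eta> ((odometer \<pi> ^^ i) y))"

definition P_dist :: "(nat \<Rightarrow> nat) \<Rightarrow> (nat \<Rightarrow> nat \<Rightarrow> nat) \<Rightarrow> nat \<Rightarrow> int measure" where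
  "P_dist \<pi> \<eta> j = distr (Ybar_measure \<pi>) (count_space UNIV) (birkhoff_sum \<pi> \<eta> j)"

definition S_set :: "(nat \<Rightarrow> nat) \<Rightarrow> (nat \<Rightarrow> nat \<Rightarrow> nat) \<Rightarrow> nat \<Rightarrow> int set" where
  "S_set \<pi> \<eta> m = (\<lambda>i. int (\<eta> m i)) ` {0..\<pi> m - 2}
      \<union> (\<lambda>i. int (\<eta> m (\<pi> m - 1)) + int (\<eta> (m+1) i)) ` {0..\<pi> (m+1) - 2}"

definition E_set :: "(nat \<Rightarrow> nat) \<Rightarrow> (nat \<Rightarrow> nat \<Rightarrow> nat) \<Rightarrow> nat \<Rightarrow> int set" where
  "E_set \<pi> \<eta> m = {a - b | a b. a \<in> S_set \<pi> \<eta> m \<and> b \<in> S_set \<pi> \<eta> m}"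

end

theory Submission
  imports Defs
begin

lemma odo_facts:
  assumes good: "\<forall>m0\<ge>1. \<exists>m\<ge>m0. y m < \<pi> m - 1"
    and bnd: "\<forall>m\<ge>1. y m < \<pi> m"
  shows "1 \<le> odo_t \<pi> y" "y (odo_t \<pi> y) < \<pi> (odo_t \<pi> y) - 1"
    "\<And>m. 1 \<le> m \<Longrightarrow> m < odo_t \<pi> y \<Longrightarrow> y m = \<pi> m - 1"
proof -
  obtain t where t: "1 \<le> t \<and> y t < \<pi> t - 1" using good by auto
  have L: "1 \<le> odo_t \<pi> y \<and> y (odo_t \<pi> y) < \<pi> (odo_t \<pi> y) - 1"
    unfolding odo_t_def by (rule LeastI[of _ t]) (use t in auto)
  then show "1 \<le> odo_t \<pi> y" "y (odo_t \<pi> y) < \<pi> (odo_t \<pi> y) - 1" by auto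
  fix m assume m: "1 \<le> m" "m < odo_t \<pi> y"
  have "\<not> (1 \<le> m \<and> y m < \<pi> m - 1)"
    using not_less_Least[of m "\<lambda>t. 1 \<le> t \<and> y t < \<pi> t - 1"] m unfolding odo_t_def by auto
  with m bnd show "y m = \<pi> m - 1" by force
qed

lemma odo_good:
  assumes pi_ge: "\<And>m. m \<ge> 1 \<Longrightarrow> \<pi> m \<ge> 2"
    and good: "\<forall>m0\<ge>1. \<exists>m\<ge>m0. y m < \<pi> m - 1"
    and bnd: "\<forall>m\<ge>1. y m < \<pi> m"
  shows "(\<forall>m0\<ge>1. \<exists>m\<ge>m0. odometer \<pi> y m < \<pi> m - 1) \<and> (\<forall>m\<ge>1. odometer \<pi> y m < \<pi> m)"
proof (intro conjI allI impI)
  note F = odo_facts[OF good bnd]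
  fix m0 :: nat assume "1 \<le> m0"
  then obtain m where m: "m \<ge> max m0 (odo_t \<pi> y + 1)" "y m < \<pi> m - 1" using good
    by (metis le_add2 max.coboundedI2 order_trans)
  then show "\<exists>m\<ge>m0. odometer \<pi> y m < \<pi> m - 1"
    by (intro exI[of _ m]) (auto simp: odometer_def)
next
  note F = odo_facts[OF good bnd]
  fix m :: nat assume m: "1 \<le> m"
  show "odometer \<pi> y m < \<pi> m" using F m bnd pi_ge[OF m]
    by (auto simp: odometer_def)
qed

lemma gamma_cong:
  fixes d :: int
  assumes pi_ge: "\<And>m. m \<ge> 1 \<Longrightarrow> \<pi> m \<ge> 2"
    and E_sub: "\<And>m. m \<ge> 1 \<Longrightarrow> E_set \<pi> \<eta> m \<subseteq> {k * d | k. True}"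
    and good: "\<forall>m0\<ge>1. \<exists>m\<ge>m0. y m < \<pi> m - 1"
    and bnd: "\<forall>m\<ge>1. y m < \<pi> m"
  shows "d dvd (gamma \<pi> \<eta> y - int (\<eta> 1 0))"
proof -
  have E1: "d dvd (int (\<eta> m i) - int (\<eta> m 0))" if "m \<ge> 1" "i \<le> \<pi> m - 2" for m i
  proof -
    have "int (\<eta> m i) - int (\<eta> m 0) \<in> E_set \<pi> \<eta> m"
      unfolding E_set_def S_set_def using that
      by (intro CollectI exI[of _ "int (\<eta> m i)"] exI[of _ "int (\<eta> m 0)"]) auto
    then show ?thesis using E_sub[OF that(1)] by auto
  qed
  have E2: "d dvd (int (\<eta> m (\<pi> m - 1)) + int (\<eta> (m+1) 0) - int (\<eta> m 0))" if "m \<ge> 1" for m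
  proof -
    have "int (\<eta> m (\<pi> m - 1)) + int (\<eta> (m+1) 0) - int (\<eta> m 0) \<in> E_set \<pi> \<eta> m"
      unfolding E_set_def S_set_def using that
      by (intro CollectI exI[of _ "int (\<eta> m (\<pi> m - 1)) + int (\<eta> (m+1) 0)"] exI[of _ "int (\<eta> m 0)"]) auto
    then show ?thesis using E_sub[OF that] by auto
  qed
  have ind: "d dvd ((\<Sum>m=1..n. int (\<eta> m (\<pi> m - 1))) + int (\<eta> (n+1) 0) - int (\<eta> 1 0))" for n
  proof (induction n)
    case 0 then show ?case by simp
  next
    case (Suc n)
    have eq: "(\<Sum>m=1..Suc n. int (\<eta> m (\<pi> m - 1))) + int (\<eta> (Suc n+1) 0) - int (\<eta> 1 0)
      = ((\<Sum>m=1..n. int (\<eta> m (\<pi> m - 1))) + int (\<eta> (n+1) 0) - int (\<eta> 1 0))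
        + (int (\<eta> (n+1) (\<pi> (n+1) - 1)) + int (\<eta> (n+1+1) 0) - int (\<eta> (n+1) 0))"
      by simp
    show ?case unfolding eq by (rule dvd_add[OF Suc.IH E2[of "n+1"]]) simp
  qed
  note F = odo_facts[OF good bnd]
  define t where "t = odo_t \<pi> y"
  have t1: "t \<ge> 1" using F t_def by auto
  have "gamma \<pi> \<eta> y = (\<Sum>m=1..t. int (\<eta> m (y m)))" by (simp add: gamma_def t_def)
  also have "\<dots> = (\<Sum>m=1..t-1. int (\<eta> m (y m))) + int (\<eta> t (y t))"
  proof -
    have "{1..t} = insert t {1..t-1}" using t1 by auto
    then show ?thesis using t1 by (simp add: add.commute sum.insert)
  qed
  also have "(\<Sum>m=1..t-1. int (\<eta> m (y m))) = (\<Sum>m=1..t-1. int (\<eta> m (\<pi> m - 1)))"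
    using F(3) t_def by (intro sum.cong) auto
  finally have g: "gamma \<pi> \<eta> y - int (\<eta> 1 0) =
     ((\<Sum>m=1..t-1. int (\<eta> m (\<pi> m - 1))) + int (\<eta> (t-1+1) 0) - int (\<eta> 1 0))
     + (int (\<eta> t (y t)) - int (\<eta> t 0))" using t1 by simp
  have "y t \<le> \<pi> t - 2" using F(2) t_def by auto
  then show ?thesis unfolding g using ind[of "t-1"] E1[OF t1] by simp
qed

lemma birk_cong:
  fixes d :: int
  assumes pi_ge: "\<And>m. m \<ge> 1 \<Longrightarrow> \<pi> m \<ge> 2"
    and E_sub: "\<And>m. m \<ge> 1 \<Longrightarrow> E_set \<pi> \<eta> m \<subseteq> {k * d | k. True}"
    and good: "\<forall>m0\<ge>1. \<exists>m\<ge>m0. y m < \<pi> m - 1"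
    and bnd: "\<forall>m\<ge>1. y m < \<pi> m"
  shows "d dvd (birkhoff_sum \<pi> \<eta> j y - int j * int (\<eta> 1 0))"
proof -
  have G: "(\<forall>m0\<ge>1. \<exists>m\<ge>m0. (odometer \<pi> ^^ i) y m < \<pi> m - 1) \<and> (\<forall>m\<ge>1. (odometer \<pi> ^^ i) y m < \<pi> m)" for i
  proof (induction i)
    case 0 then show ?case using good bnd by simp
  next
    case (Suc i) then show ?case using odo_good[where \<pi>=\<pi>, OF pi_ge] by simp
  qed
  have "birkhoff_sum \<pi> \<eta> j y - int j * int (\<eta> 1 0) = (\<Sum>i<j. gamma \<pi> \<eta> ((odometer \<pi> ^^ i) y) - int (\<eta> 1 0))"
    by (simp add: birkhoff_sum_def sum_subtractf)
  also have "d dvd \<dots>"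
    using gamma_cong[where \<pi>=\<pi> and \<eta>=\<eta>, OF pi_ge E_sub] G by (intro dvd_sum) blast
  finally show ?thesis .
qed

theorem mainTheorem17:
  fixes \<pi> :: "nat \<Rightarrow> nat" and \<eta> :: "nat \<Rightarrow> nat \<Rightarrow> nat" and d :: int
  assumes pi_ge: "\<And>m. m \<ge> 1 \<Longrightarrow> \<pi> m \<ge> 2"
    and d_ge: "d \<ge> 1"
    and E_sub: "\<And>m. m \<ge> 1 \<Longrightarrow> E_set \<pi> \<eta> m \<subseteq> {k * d | k. True}"
  shows "\<forall>j \<ge> 1. \<forall>\<alpha> \<beta> :: int.
           measure (P_dist \<pi> \<eta> j) {\<alpha>} > 0 \<and> measure (P_dist \<pi> \<eta> j) {\<beta>} > 0
           \<longrightarrow> d dvd (\<alpha> - \<beta>)"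
proof (intro allI impI)
  fix j :: nat and \<alpha> \<beta> :: int
  assume hyp: "measure (P_dist \<pi> \<eta> j) {\<alpha>} > 0 \<and> measure (P_dist \<pi> \<eta> j) {\<beta>} > 0"
  define M where "M = Ybar_measure \<pi>"
  define Mi where "Mi = (\<lambda>m. measure_pmf (pmf_of_set {0..<\<pi> m}))"
  define I :: "nat set" where "I = {1..}"
  have M': "M = PiM I Mi" by (simp add: M_def Mi_def I_def Ybar_measure_def)
  have PS: "prob_space M" unfolding M' by (rule prob_space_PiM) (simp add: Mi_def prob_space_measure_pmf)
  interpret P: prob_space M by fact
  have setsC: "prod_emb I Mi J (PiE J A) \<in> sets M" if "finite J" "J \<subseteq> I" for J A
    unfolding M' using that by (intro sets_PiM_I) (auto simp: Mi_def)
  have cyl: "measure M (prod_emb I Mi J (PiE J A)) = (\<Prod>i\<in>J. measure (Mi i) (A i))"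
    if "finite J" "J \<subseteq> I" for J A
  proof -
    have "emeasure M (prod_emb I Mi J (PiE J A)) = (\<Prod>i\<in>J. emeasure (Mi i) (A i))"
      unfolding M' using that
      by (intro emeasure_PiM_emb) (auto simp: Mi_def prob_space_measure_pmf)
    also have "\<dots> = ennreal (\<Prod>i\<in>J. measure (Mi i) (A i))"
      by (simp add: Mi_def measure_pmf.emeasure_eq_measure prod_ennreal)
    finally show ?thesis
      by (intro measure_eq_emeasure_eq_ennreal) (auto intro: prod_nonneg)
  qed
  have meas1: "measure (Mi m) {\<pi> m - 1} = 1 / \<pi> m" if "m \<ge> 1" for m
  proof -
    have "{0..<\<pi> m} \<inter> {\<pi> m - 1} = {\<pi> m - 1}" using pi_ge[OF that] by auto
    then show ?thesis using pi_ge[OF that] unfolding Mi_def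
      by (subst measure_pmf_of_set) auto
  qed
  have meas0: "measure (Mi m) {\<pi> m..} = 0" if "m \<ge> 1" for m
  proof -
    have "{0..<\<pi> m} \<inter> {\<pi> m..} = {}" by auto
    then show ?thesis using pi_ge[OF that] unfolding Mi_def
      by (subst measure_pmf_of_set) auto
  qed
  define C where "C = (\<lambda>k m0. prod_emb I Mi {m0..<m0+k} (PiE {m0..<m0+k} (\<lambda>m. {\<pi> m - 1})))"
  define D where "D = (\<lambda>m0. \<Inter>k. C k m0)"
  define E where "E = (\<lambda>m. prod_emb I Mi {m} (PiE {m} (\<lambda>m. {\<pi> m..})))"
  have Csets: "C k m0 \<in> sets M" if "m0 \<ge> 1" for k m0
    unfolding C_def using that by (intro setsC) (auto simp: I_def)
  have Cmeas: "measure M (C k m0) \<le> (1/2)^k" if "m0 \<ge> 1" for k m0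
  proof -
    have "measure M (C k m0) = (\<Prod>m\<in>{m0..<m0+k}. measure (Mi m) {\<pi> m - 1})"
      unfolding C_def using that by (intro cyl) (auto simp: I_def)
    also have "\<dots> = (\<Prod>m\<in>{m0..<m0+k}. 1 / real (\<pi> m))"
      by (intro prod.cong refl meas1) (use that in auto)
    also have "\<dots> \<le> (\<Prod>m\<in>{m0..<m0+k}. 1/2)"
    proof (intro prod_mono conjI)
      fix m assume "m \<in> {m0..<m0+k}"
      then have "real (\<pi> m) \<ge> 2" using pi_ge[of m] that by auto
      then show "1 / real (\<pi> m) \<le> 1/2" by (simp add: field_simps)
    qed simp
    also have "\<dots> = (1/2)^k" by simp
    finally show ?thesis .
  qed
  have Dnull: "D m0 \<in> null_sets M" if "m0 \<ge> 1" for m0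
  proof -
    have Ds: "D m0 \<in> sets M" unfolding D_def using Csets[OF that] by (intro sets.countable_INT) auto
    have le: "measure M (D m0) \<le> (1/2)^k" for k
    proof -
      have "measure M (D m0) \<le> measure M (C k m0)"
        using Csets[OF that] by (intro P.finite_measure_mono) (auto simp: D_def)
      then show ?thesis using Cmeas[OF that, of k] by linarith
    qed
    have "measure M (D m0) = 0"
    proof (rule ccontr)
      assume "measure M (D m0) \<noteq> 0"
      then have "measure M (D m0) > 0" using measure_nonneg[of M "D m0"] by linarith
      then obtain k where "(1/2::real)^k < measure M (D m0)"
        using real_arch_pow_inv[of "measure M (D m0)" "1/2"] by auto
      with le[of k] show False by linarith
    qed
    then show ?thesis using Ds by (simp add: P.emeasure_eq_measure null_setsI)
  qed
  have Enull: "E m \<in> null_sets M" if "m \<ge> 1" for m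
  proof -
    have Es: "E m \<in> sets M" unfolding E_def using that by (intro setsC) (auto simp: I_def)
    have "measure M (E m) = (\<Prod>i\<in>{m}. measure (Mi i) {\<pi> i..})"
      unfolding E_def using that by (intro cyl) (auto simp: I_def)
    also have "\<dots> = 0" using meas0[OF that] by simp
    finally show ?thesis using Es by (simp add: P.emeasure_eq_measure null_setsI)
  qed
  define N where "N = (\<Union>m. D (Suc m)) \<union> (\<Union>m. E (Suc m))"
  have Nnull: "N \<in> null_sets M" unfolding N_def
    by (intro null_sets.Un null_sets_UN Dnull Enull) auto
  have goodN: "(\<forall>m0\<ge>1. \<exists>m\<ge>m0. y m < \<pi> m - 1) \<and> (\<forall>m\<ge>1. y m < \<pi> m)"
    if y: "y \<in> space M" "y \<notin> N" for y
  proof -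
    have sp: "y \<in> extensional I" using y(1) unfolding M' by (simp add: space_PiM PiE_def)
    have bnd: "\<forall>m\<ge>1. y m < \<pi> m"
    proof (intro allI impI)
      fix m :: nat assume m: "1 \<le> m"
      then obtain n where n: "m = Suc n" by (cases m) auto
      have "y \<notin> E m" using y(2) n unfolding N_def by auto
      then show "y m < \<pi> m" using sp unfolding E_def
        by (auto simp: prod_emb_iff Mi_def PiE_iff)
    qed
    have "\<forall>m0\<ge>1. \<exists>m\<ge>m0. y m < \<pi> m - 1"
    proof (intro allI impI)
      fix m0 :: nat assume m: "1 \<le> m0"
      then obtain n where n: "m0 = Suc n" by (cases m0) auto
      have "y \<notin> D m0" using y(2) n unfolding N_def by auto
      then obtain k where "y \<notin> C k m0" unfolding D_def by auto
      then obtain m where mm: "m \<in> {m0..<m0+k}" "y m \<noteq> \<pi> m - 1" using sp unfolding C_def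
        by (auto simp: prod_emb_iff Mi_def PiE_iff)
      have "y m < \<pi> m" using bnd mm(1) m by auto
      then have "y m < \<pi> m - 1" using mm(2) by linarith
      then show "\<exists>m\<ge>m0. y m < \<pi> m - 1" using mm by auto
    qed
    with bnd show ?thesis by blast
  qed
  have ex: "\<exists>y\<in>space M - N. birkhoff_sum \<pi> \<eta> j y = a" if pos: "measure (P_dist \<pi> \<eta> j) {a} > 0" for a
  proof (rule ccontr)
    assume nex: "\<not> ?thesis"
    let ?A = "birkhoff_sum \<pi> \<eta> j -` {a} \<inter> space M"
    have sub: "?A \<subseteq> N" using nex by auto
    have A0: "emeasure M ?A = 0"
    proof (cases "?A \<in> sets M")
      case True
      then have "emeasure M ?A \<le> emeasure M N" using Nnull sub by (intro emeasure_mono) auto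
      then show ?thesis using Nnull by auto
    next
      case False then show ?thesis by (rule emeasure_notin_sets)
    qed
    have "emeasure (P_dist \<pi> \<eta> j) {a} = 0"
      unfolding P_dist_def distr_def emeasure_measure_of_conv M_def[symmetric] using A0 by simp
    then have "measure (P_dist \<pi> \<eta> j) {a} = 0" by (simp add: measure_def)
    with pos show False by simp
  qed
  obtain ya where ya: "ya \<in> space M - N" "birkhoff_sum \<pi> \<eta> j ya = \<alpha>" using ex hyp by blast
  obtain yb where yb: "yb \<in> space M - N" "birkhoff_sum \<pi> \<eta> j yb = \<beta>" using ex hyp by blast
  have "d dvd (\<alpha> - int j * int (\<eta> 1 0))"
    using goodN[of ya] ya birk_cong[where \<pi>=\<pi> and \<eta>=\<eta>, OF pi_ge E_sub, of ya j] by auto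
  moreover have "d dvd (\<beta> - int j * int (\<eta> 1 0))"
    using goodN[of yb] yb birk_cong[where \<pi>=\<pi> and \<eta>=\<eta>, OF pi_ge E_sub, of yb j] by auto
  ultimately have "d dvd ((\<alpha> - int j * int (\<eta> 1 0)) - (\<beta> - int j * int (\<eta> 1 0)))"
    by (rule dvd_diff)
  then show "d dvd (\<alpha> - \<beta>)" by simp
qed

end
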